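(* Let $(A,\cdot)$ be an associative algebra over a field $\mathbf{k}$ of characteristic $0$ and $N:A\to A$ a Nijenhuis operator. Let $\pi_N\in\mathcal{O}_A(2)$ be given by $\pi_N([1];a,b)=a\cdot N(b)$, $\pi_N([2];a,b)=N(a)\cdot b$, $\pi_N([3];a,b)=-N(a\cdot b)$ (the Maurer–Cartan element encoding the NS-algebra induced by $N$). For $n\ge1$ define $\Theta_n:\mathrm{Hom}(A^{\otimes n},A)\to\mathcal{O}_A(n+1)$ by $$\Theta_n(f)([r];a_1,\dots,a_{n+1})=\begin{cases}(-1)^{n+1}a_1\cdot f(a_2,\dots,a_{n+1}) & r=1,\\ 0 & 2\le r\le n,\\ f(a_1,\dots,a_n)\cdot a_{n+1} & r=n+1,\\ \sum_{i=1}^n(-1)^{n+i+1}f(a_1,\dots,a_i\cdot a_{i+1},\dots,a_{n+1}) & r=n+2.\end{cases}$$ Then $\delta_{\pi_N}\circ\Theta_n=\Theta_{n+1}\circ d_N$ for all $n\ge1$, so $\{\Theta_n\}_{n\ge1}$ is a homomorphism of cochain complexes from $\{\bigoplus_{n\ge1}\mathrm{Hom}(A^{\otimes n},A),d_N\}$ to $\{\bigoplus_{n\ge1}\mathcal{O}_A(n+1),\delta_{\pi_N}\}$, and it induces homomorphisms $\Theta:H^n(N)\to H^{n+1}_{\mathrm{NS}}(A_{\mathrm{NS}})$.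
   Context: A Nijenhuis operator on $(A,\cdot)$ is a linear $N$ with $N(a)N(b)=N(N(a)b+aN(b)-N(ab))$. The map $d_N:\mathrm{Hom}(A^{\otimes n},A)\to\mathrm{Hom}(A^{\otimes n+1},A)$ is, for $n\ge1$, $(d_Nf)(a_1,\dots,a_{n+1})=N(a_1)\cdot f(a_2,\dots,a_{n+1})-(-1)^nf(a_1,\dots,a_n)\cdot N(a_{n+1})+\sum_{i=1}^n(-1)^if(a_1,\dots,a_{i-1},N(a_i)a_{i+1}+a_iN(a_{i+1})-N(a_ia_{i+1}),\dots,a_{n+1})-N\big((\delta_{\mathrm{Hoch}}f)(a_1,\dots,a_{n+1})\big)$, where $(\delta_{\mathrm{Hoch}}f)(a_1,\dots,a_{n+1})=a_1f(a_2,\dots,a_{n+1})+\sum_{i=1}^n(-1)^if(a_1,\dots,a_ia_{i+1},\dots,a_{n+1})+(-1)^{n+1}f(a_1,\dots,a_n)a_{n+1}$; and on $A=\mathrm{Hom}(A^{\otimes0},A)$, $d_N(a)(b)=N(b)a-aN(b)-N(ba-ab)$. Then $d_N^2=0$ and $H^\bullet(N)$ denotes the cohomology of $\{\bigoplus_{n\ge0}\mathrm{Hom}(A^{\otimes n},A),d_N\}$. Let $C_n=\{[1],\dots,[n]\}$ be formal symbols. $\mathcal{O}_A(1)=\mathrm{Hom}(\mathbf{k}[C_1]\otimes A,A)$ and $\mathcal{O}_A(n)=\mathrm{Hom}(\mathbf{k}[C_{n+1}]\otimes A^{\otimes n},A)$ for $n\ge2$. For $f\in\mathcal{O}_A(m)$,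 $g\in\mathcal{O}_A(n)$ with $m,n\ge2$ and $1\le i\le m$, write $G_*=\sum_{j=1}^{n+1}g([j];a_i,\dots,a_{i+n-1})$; then $f\circ_ig\in\mathcal{O}_A(m+n-1)$ is: for $1\le r\le i-1$, $f([r];a_1,\dots,a_{i-1},G_*,a_{i+n},\dots,a_{m+n-1})$; for $i\le r\le i+n-1$, $f([i];a_1,\dots,a_{i-1},g([r-i+1];a_i,\dots,a_{i+n-1}),\dots,a_{m+n-1})$; for $i+n\le r\le m+n-1$, $f([r-n+1];a_1,\dots,a_{i-1},G_*,\dots,a_{m+n-1})$; for $r=m+n$, $f([i];\dots,g([n+1];a_i,\dots,a_{i+n-1}),\dots)+f([m+1];\dots,G_*,\dots)$. Set $[\![f,g]\!]=\sum_{i=1}^m(-1)^{(i-1)(n-1)}f\circ_ig-(-1)^{(m-1)(n-1)}\sum_{i=1}^n(-1)^{(i-1)(m-1)}g\circ_if$ and, for an NS-algebra structure $\pi\in\mathcal{O}_A(2)$, $\delta_\pi(f)=(-1)^{n-1}[\![\pi,f]\!]$ for $f\in\mathcal{O}_A(n)$. $H^\bullet_{\mathrm{NS}}$ is the cohomology of $\{\bigoplus_{n\ge1}\mathcal{O}_A(n),\delta_\pi\}$; $A_{\mathrm{NS}}$ is the NS-algebra $(A,\prec_N,\succ_N,\curlyvee_N)$ with $a\prec_Nb=a\cdot N(b)$, $a\succ_Nb=N(a)\cdot b$, $a\curlyvee_Nb=-N(a\cdot b)$, corresponding to $\pi=\pi_N$. *)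

theory Defs
  imports Main "HOL.Vector_Spaces"
begin

text \<open>The algebra A is a type 'a of class ring (associative,
  distributive, not necessarily unital) which is a module over a field 'k of
  characteristic 0 via scale, with multiplication k-bilinear.
  An element of Hom(A tensor n, A) is a function 'a list \<Rightarrow> 'a, k-multilinear
  on lists of length n (a_1,...,a_n is the list whose (j-1)-th entry is a_j).
  An element of O_A(n) (n \<ge> 2) is a function nat \<Rightarrow> 'a list \<Rightarrow> 'a, where the
  first argument r \<in> {1..n+1} is the formal symbol [r].\<close>

definition sgnp :: "nat \<Rightarrow> 'a::ab_group_add \<Rightarrow> 'a" where
  "sgnp n x = (if even n then x else - x)"

definition multilinear_on ::
  "('k \<Rightarrow> 'a \<Rightarrow> 'a) \<Rightarrow> nat \<Rightarrow> ('a::ab_group_add list \<Rightarrow> 'a) \<Rightarrow> bool" where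
  "multilinear_on scale n f \<longleftrightarrow>
     (\<forall>as i x y c. length as = n \<and> i < n \<longrightarrow>
        f (as[i := x + y]) = f (as[i := x]) + f (as[i := y]) \<and>
        f (as[i := scale c x]) = scale c (f (as[i := x])))"

definition linear_map :: "('k \<Rightarrow> 'a \<Rightarrow> 'a) \<Rightarrow> ('a::ab_group_add \<Rightarrow> 'a) \<Rightarrow> bool" where
  "linear_map scale N \<longleftrightarrow> (\<forall>x y c. N (x + y) = N x + N y \<and> N (scale c x) = scale c (N x))"

definition bilinear_mult :: "('k \<Rightarrow> 'a \<Rightarrow> 'a) \<Rightarrow> ('a::ring) itself \<Rightarrow> bool" where
  "bilinear_mult scale _ \<longleftrightarrow>
     (\<forall>c x y. scale c (x * y) = scale c x * y \<and> scale c (x * y) = x * scale c y)"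

definition nijenhuis :: "('a::ring \<Rightarrow> 'a) \<Rightarrow> bool" where
  "nijenhuis N \<longleftrightarrow> (\<forall>a b. N a * N b = N (N a * b + a * N b - N (a * b)))"

text \<open>Replace the entries a_i, a_(i+1) (1-based, 1 \<le> i) by h a_i a_(i+1).\<close>
definition merge2 :: "('a \<Rightarrow> 'a \<Rightarrow> 'a) \<Rightarrow> nat \<Rightarrow> 'a list \<Rightarrow> 'a list" where
  "merge2 h i as = take (i - 1) as @ [h (as ! (i - 1)) (as ! i)] @ drop (i + 1) as"

text \<open>Hochschild coboundary of f of arity n (argument list of length n+1).\<close>
definition hoch :: "nat \<Rightarrow> ('a::ring list \<Rightarrow> 'a) \<Rightarrow> 'a list \<Rightarrow> 'a" where
  "hoch n f as = hd as * f (tl as)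
     + (\<Sum>i=1..n. sgnp i (f (merge2 (*) i as)))
     + sgnp (n + 1) (f (butlast as) * last as)"

definition dN :: "('a::ring \<Rightarrow> 'a) \<Rightarrow> nat \<Rightarrow> ('a list \<Rightarrow> 'a) \<Rightarrow> 'a list \<Rightarrow> 'a" where
  "dN N n f as = N (hd as) * f (tl as)
     - sgnp n (f (butlast as) * N (last as))
     + (\<Sum>i=1..n. sgnp i (f (merge2 (\<lambda>a b. N a * b + a * N b - N (a * b)) i as)))
     - N (hoch n f as)"

definition ocomp :: "nat \<Rightarrow> nat \<Rightarrow> (nat \<Rightarrow> 'a list \<Rightarrow> 'a) \<Rightarrow> nat
     \<Rightarrow> (nat \<Rightarrow> 'a list \<Rightarrow> 'a::ab_group_add) \<Rightarrow> nat \<Rightarrow> 'a list \<Rightarrow> 'a" where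
  "ocomp m n f i g r as =
     (let B = take n (drop (i - 1) as);
          G = (\<Sum>j=1..n+1. g j B);
          subst = (\<lambda>x. take (i - 1) as @ [x] @ drop (i - 1 + n) as)
      in if r \<le> i - 1 then f r (subst G)
         else if r \<le> i + n - 1 then f i (subst (g (r - i + 1) B))
         else if r \<le> m + n - 1 then f (r - n + 1) (subst G)
         else f i (subst (g (n + 1) B)) + f (m + 1) (subst G))"

definition obracket :: "nat \<Rightarrow> nat \<Rightarrow> (nat \<Rightarrow> 'a list \<Rightarrow> 'a)
     \<Rightarrow> (nat \<Rightarrow> 'a list \<Rightarrow> 'a::ab_group_add) \<Rightarrow> nat \<Rightarrow> 'a list \<Rightarrow> 'a" where
  "obracket m n f g r as =
     (\<Sum>i=1..m. sgnp ((i - 1) * (n - 1)) (ocomp m n f i g r as))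
     - sgnp ((m - 1) * (n - 1)) (\<Sum>i=1..n. sgnp ((i - 1) * (m - 1)) (ocomp n m g i f r as))"

definition odelta :: "(nat \<Rightarrow> 'a list \<Rightarrow> 'a) \<Rightarrow> nat
     \<Rightarrow> (nat \<Rightarrow> 'a list \<Rightarrow> 'a::ab_group_add) \<Rightarrow> nat \<Rightarrow> 'a list \<Rightarrow> 'a" where
  "odelta pi n f r as = sgnp (n - 1) (obracket 2 n pi f r as)"

definition piN :: "('a::ring \<Rightarrow> 'a) \<Rightarrow> nat \<Rightarrow> 'a list \<Rightarrow> 'a" where
  "piN N r as = (let a = as ! 0; b = as ! 1 in
     if r = 1 then a * N b else if r = 2 then N a * b
     else if r = 3 then - N (a * b) else 0)"

definition Theta :: "nat \<Rightarrow> ('a::ring list \<Rightarrow> 'a) \<Rightarrow> nat \<Rightarrow> 'a list \<Rightarrow> 'a" where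
  "Theta n f r as =
     (if r = 1 then sgnp (n + 1) (hd as * f (tl as))
      else if 2 \<le> r \<and> r \<le> n then 0
      else if r = n + 1 then f (butlast as) * last as
      else if r = n + 2 then (\<Sum>i=1..n. sgnp (n + i + 1) (f (merge2 (*) i as)))
      else 0)"

end

theory Submission
  imports Defs
begin

lemma sgnp_0[simp]: "sgnp 0 x = x" by (simp add: sgnp_def)
lemma sgnp_Suc[simp]: "sgnp (Suc n) x = - sgnp n x" by (simp add: sgnp_def)
lemma sgnp_add[simp]: "sgnp (m + n) x = sgnp m (sgnp n x)" by (simp add: sgnp_def)
lemma sgnp_num[simp]: "sgnp (numeral k) x = (if even (numeral k :: nat) then x else - x)" by (simp add: sgnp_def)
lemma sgnp_neg[simp]: "sgnp n (- x) = - sgnp n x" by (simp add: sgnp_def)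
lemma sgnp_plus[simp]: "sgnp n (x + y) = sgnp n x + sgnp n y" by (simp add: sgnp_def)
lemma sgnp_diff[simp]: "sgnp n (x - y) = sgnp n x - sgnp n y" by (simp add: sgnp_def)
lemma sgnp_zero[simp]: "sgnp n 0 = 0" by (simp add: sgnp_def)
lemma sgnp_sgnp[simp]: "sgnp n (sgnp n x) = x" by (simp add: sgnp_def)
lemma sgnp_sum: "sgnp n (sum g A) = (\<Sum>i\<in>A. sgnp n (g i))" by (simp add: sgnp_def sum_negf)
lemma sgnp_multl[simp]: "sgnp n (x::'a::ring) * y = sgnp n (x * y)" by (simp add: sgnp_def)
lemma sgnp_multr[simp]: "(x::'a::ring) * sgnp n y = sgnp n (x * y)" by (simp add: sgnp_def)
lemma sgnp_pred: "1 \<le> i \<Longrightarrow> sgnp (i - Suc 0) x = - sgnp i x"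
  by (cases i) simp_all
lemma sgnp_comm: "sgnp m (sgnp n x) = sgnp n (sgnp m x)" by (simp add: sgnp_def)

lemma length_merge2[simp]: "1 \<le> i \<Longrightarrow> i < length as \<Longrightarrow> length (merge2 h i as) = length as - 1"
  by (simp add: merge2_def)

lemma merge2_app: "merge2 h (Suc (length xs)) (xs @ a # b # ys) = xs @ h a b # ys"
  by (simp add: merge2_def nth_append)

lemma decomp1: "1 \<le> i \<Longrightarrow> i < length as \<Longrightarrow>
   \<exists>xs a b ys. as = xs @ a # b # ys \<and> length xs = i - 1"
proof -
  assume h: "1 \<le> i" "i < length as"
  have "as = take (i-1) as @ as!(i-1) # as!i # drop (i+1) as"
    using h by (metis Cons_nth_drop_Suc One_nat_def Suc_pred' add.commute append_take_drop_id
        le_less_trans less_imp_diff_less linorder_not_le not_one_le_zero plus_1_eq_Suc)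
  then show ?thesis using h by (metis length_take min_absorb2 less_imp_le_nat le_less_trans diff_le_self)
qed

lemma merge2_app': "j = Suc (length xs) \<Longrightarrow> merge2 h j (xs @ a # b # ys) = xs @ h a b # ys"
  by (simp add: merge2_app)

definition merge3 :: "('a \<Rightarrow> 'a \<Rightarrow> 'a \<Rightarrow> 'a) \<Rightarrow> nat \<Rightarrow> 'a list \<Rightarrow> 'a list" where
  "merge3 t j as = take (j - 1) as @ [t (as ! (j - 1)) (as ! j) (as ! (j + 1))] @ drop (j + 2) as"

lemma merge3_app': "j = Suc (length xs) \<Longrightarrow> merge3 t j (xs @ a # b # c # ys) = xs @ t a b c # ys"
  by (simp add: merge3_def nth_append)

lemma split_at: "j < length as \<Longrightarrow> as = take j as @ as ! j # drop (Suc j) as"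
  by (simp add: id_take_nth_drop)

lemma decomp3: "1 \<le> k \<Longrightarrow> k + 1 < length as \<Longrightarrow>
   \<exists>xs a b c ys. as = xs @ a # b # c # ys \<and> length xs = k - 1"
proof -
  assume h: "1 \<le> k" "k + 1 < length as"
  have "as = take (k-1) as @ drop (k-1) as" by simp
  moreover have "drop (k-1) as = as!(k-1) # as!k # as!(k+1) # drop (k+2) as"
    using h by (metis Cons_nth_drop_Suc Suc_eq_plus1 Suc_lessD Suc_pred' add_2_eq_Suc' less_le_trans less_one not_less)
  ultimately show ?thesis using h by (metis length_take min_absorb2 less_imp_le_nat le_less_trans diff_le_self Suc_lessD add_lessD1)
qed

lemma merge2_comm:
  assumes "1 \<le> k" "k + 2 \<le> i" "i < length as"
  shows "merge2 h1 k (merge2 h2 i as) = merge2 h2 (i - 1) (merge2 h1 k as)"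
proof -
  obtain xs a b ys where as: "as = xs @ a # b # ys" and lx: "length xs = k - 1"
    using decomp1[of k as] assms by auto
  have "i - k - 1 < length ys" using assms as lx by auto
  moreover have "1 \<le> i - k - 1" using assms by auto
  ultimately obtain us c d vs where ys: "ys = us @ c # d # vs" and lu0: "length us = i - k - 1 - 1"
    using decomp1[of "i - k - 1" ys] by blast
  have lu: "length us = i - k - 2" using lu0 by simp
  have e1: "merge2 h2 i as = (xs @ a # b # us) @ h2 c d # vs"
    by (rule trans[OF _ merge2_app'], simp add: as ys, use assms lx lu in simp)
  have e2: "merge2 h1 k ((xs @ a # b # us) @ h2 c d # vs) = xs @ h1 a b # us @ h2 c d # vs"
    by (simp, rule merge2_app', use assms lx in simp)
  have e3: "merge2 h1 k as = (xs @ h1 a b # us) @ c # d # vs"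
    by (simp add: as ys, rule merge2_app', use assms lx in simp)
  have e4: "merge2 h2 (i - 1) ((xs @ h1 a b # us) @ c # d # vs) = xs @ h1 a b # us @ h2 c d # vs"
    by (subst merge2_app', use assms lx lu in simp, simp)
  show ?thesis using e1 e2 e3 e4 by simp
qed

lemma merge2_adj1:
  assumes "1 \<le> k" "k + 1 < length as"
  shows "merge2 h1 k (merge2 h2 k as) = merge3 (\<lambda>x y z. h1 (h2 x y) z) k as"
proof -
  obtain xs a b c ys where as: "as = xs @ a # b # c # ys" and lx: "length xs = k - 1"
    using decomp3[of k as] assms by auto
  show ?thesis unfolding as
    by (subst merge2_app', use assms lx in simp, subst merge2_app', use assms lx in simp,
        subst merge3_app', use assms lx in simp, simp)
qed

lemma merge2_adj2:
  assumes "1 \<le> k" "k + 1 < length as"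
  shows "merge2 h1 k (merge2 h2 (k + 1) as) = merge3 (\<lambda>x y z. h1 x (h2 y z)) k as"
proof -
  obtain xs a b c ys where as: "as = xs @ a # b # c # ys" and lx: "length xs = k - 1"
    using decomp3[of k as] assms by auto
  have "merge2 h2 (k + 1) as = (xs @ [a]) @ b # c # ys \<Longrightarrow> True" by simp
  have e1: "merge2 h2 (k + 1) as = xs @ a # h2 b c # ys"
    unfolding as using merge2_app'[of "k+1" "xs @ [a]" h2 b c ys] assms lx by simp
  show ?thesis unfolding e1
    by (subst merge2_app', use assms lx in simp, unfold as,
        subst merge3_app', use assms lx in simp, simp)
qed

definition Tm :: "('a list \<Rightarrow> 'b::ab_group_add) \<Rightarrow> ('a \<Rightarrow> 'a \<Rightarrow> 'a) \<Rightarrow> ('a \<Rightarrow> 'a \<Rightarrow> 'a) \<Rightarrow> 'a list \<Rightarrow> nat \<times> nat \<Rightarrow> 'b" where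
  "Tm g h1 h2 as p = sgnp (fst p + snd p) (g (merge2 h1 (snd p) (merge2 h2 (fst p) as)))"

lemma lo_hi:
  assumes "length as = L + 2"
  shows "sum (Tm g h1 h2 as) {(i,k). 1 \<le> k \<and> k + 2 \<le> i \<and> i \<le> L + 1}
       + sum (Tm g h2 h1 as) {(i,k). 1 \<le> i \<and> i + 1 \<le> k \<and> k \<le> L} = 0"
proof -
  have "sum (Tm g h1 h2 as) {(i,k). 1 \<le> k \<and> k + 2 \<le> i \<and> i \<le> L + 1}
      = sum (\<lambda>p. - Tm g h2 h1 as p) {(i,k). 1 \<le> i \<and> i + 1 \<le> k \<and> k \<le> L}"
  proof (rule sum.reindex_bij_witness[where j = "\<lambda>(i,k). (k, i - 1)" and i = "\<lambda>(a,b). (b + 1, a)"])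
    fix p assume p: "p \<in> {(i,k). 1 \<le> k \<and> k + 2 \<le> i \<and> i \<le> L + 1}"
    obtain i k where pik: "p = (i,k)" by fastforce
    have c: "merge2 h1 k (merge2 h2 i as) = merge2 h2 (i - 1) (merge2 h1 k as)"
      using p pik assms by (intro merge2_comm) auto
    have "k + (i - 1) = Suc (i + k) - 2" using p pik by auto
    then show "- Tm g h2 h1 as (case p of (i, k) \<Rightarrow> (k, i - 1)) = Tm g h1 h2 as p"
      using p pik c by (simp add: Tm_def sgnp_def)
  qed auto
  then show ?thesis by (simp add: sum_negf)
qed

lemma double_split:
  assumes "length as = L + 2"
  shows "(\<Sum>i=1..L+1. \<Sum>k=1..L. sgnp (i + k) (g (merge2 h1 k (merge2 h2 i as))))
     = sum (Tm g h1 h2 as) {(i,k). 1 \<le> k \<and> k + 2 \<le> i \<and> i \<le> L + 1}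
       + sum (Tm g h1 h2 as) {(i,k). 1 \<le> i \<and> i + 1 \<le> k \<and> k \<le> L}
       + (\<Sum>j=1..L. g (merge3 (\<lambda>x y z. h1 (h2 x y) z) j as) - g (merge3 (\<lambda>x y z. h1 x (h2 y z)) j as))"
proof -
  let ?D = "{1..L+1} \<times> {1..L}"
  let ?lo = "{(i,k). 1 \<le> k \<and> k + 2 \<le> i \<and> i \<le> L + 1}"
  let ?hi = "{(i,k). 1 \<le> i \<and> i + 1 \<le> k \<and> k \<le> L}"
  let ?a = "(\<lambda>k. (k + 1, k)) ` {1..L}"
  let ?b = "(\<lambda>k. (k, k)) ` {1..L}"
  have lhs: "(\<Sum>i=1..L+1. \<Sum>k=1..L. sgnp (i + k) (g (merge2 h1 k (merge2 h2 i as)))) = sum (Tm g h1 h2 as) ?D"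
    by (simp add: sum.cartesian_product Tm_def split_def)
  have D: "?D = ((?lo \<union> ?hi) \<union> ?a) \<union> ?b"
  proof (rule set_eqI, rule iffI)
    fix p assume "p \<in> ?D"
    then obtain i k where p: "p = (i,k)" "1 \<le> i" "i \<le> L+1" "1 \<le> k" "k \<le> L" by auto
    show "p \<in> ((?lo \<union> ?hi) \<union> ?a) \<union> ?b"
    proof (cases "k + 2 \<le> i")
      case True then show ?thesis using p by auto
    next
      case False
      show ?thesis
      proof (cases "i + 1 \<le> k")
        case True then show ?thesis using p by auto
      next
        case F2: False
        then have "i = k + 1 \<or> i = k" using False by auto
        then show ?thesis using p by auto
      qed
    qed
  qed auto
  have fin: "finite ?lo" "finite ?hi"
    by (rule finite_subset[of _ ?D], auto)+
  have "sum (Tm g h1 h2 as) ?D = sum (Tm g h1 h2 as) ?lo + sum (Tm g h1 h2 as) ?hi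
        + sum (Tm g h1 h2 as) ?a + sum (Tm g h1 h2 as) ?b"
    unfolding D using fin
    by (subst sum.union_disjoint, auto)+
  moreover have "sum (Tm g h1 h2 as) ?a = (\<Sum>j=1..L. - g (merge3 (\<lambda>x y z. h1 x (h2 y z)) j as))"
    by (subst sum.reindex, simp add: inj_on_def, rule sum.cong, simp,
        simp add: Tm_def merge2_adj2[simplified] assms sgnp_def)
  moreover have "sum (Tm g h1 h2 as) ?b = (\<Sum>j=1..L. g (merge3 (\<lambda>x y z. h1 (h2 x y) z) j as))"
    by (subst sum.reindex, simp add: inj_on_def, rule sum.cong, simp,
        simp add: Tm_def merge2_adj1 assms sgnp_def)
  ultimately show ?thesis using lhs by (simp add: sum_subtractf sum_negf)
qed

lemma S_self:
  assumes "length as = L + 2" "\<And>x y z. h (h x y) z = h x (h y z)"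
  shows "(\<Sum>i=1..L+1. \<Sum>k=1..L. sgnp (i + k) (g (merge2 h k (merge2 h i as)))) = 0"
proof -
  have e: "\<And>j. merge3 (\<lambda>x y z. h (h x y) z) j as = merge3 (\<lambda>x y z. h x (h y z)) j as"
    using assms(2) by simp
  have l: "sum (Tm g h h as) {(i,k). 1 \<le> k \<and> k + 2 \<le> i \<and> i \<le> L + 1}
       + sum (Tm g h h as) {(i,k). 1 \<le> i \<and> i + 1 \<le> k \<and> k \<le> L} = 0"
    using lo_hi[OF assms(1)] by blast
  show ?thesis using double_split[OF assms(1), of g h h] l e by simp
qed

lemma S_pair:
  assumes "length as = L + 2"
  shows "(\<Sum>i=1..L+1. \<Sum>k=1..L. sgnp (i + k) (g (merge2 h1 k (merge2 h2 i as))))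
       + (\<Sum>i=1..L+1. \<Sum>k=1..L. sgnp (i + k) (g (merge2 h2 k (merge2 h1 i as))))
     = (\<Sum>j=1..L. g (merge3 (\<lambda>x y z. h1 (h2 x y) z) j as) - g (merge3 (\<lambda>x y z. h1 x (h2 y z)) j as)
          + g (merge3 (\<lambda>x y z. h2 (h1 x y) z) j as) - g (merge3 (\<lambda>x y z. h2 x (h1 y z)) j as))"
proof -
  have l1: "sum (Tm g h1 h2 as) {(i,k). 1 \<le> k \<and> k + 2 \<le> i \<and> i \<le> L + 1}
       + sum (Tm g h2 h1 as) {(i,k). 1 \<le> i \<and> i + 1 \<le> k \<and> k \<le> L} = 0"
    using lo_hi[OF assms(1)] by blast
  have l2: "sum (Tm g h2 h1 as) {(i,k). 1 \<le> k \<and> k + 2 \<le> i \<and> i \<le> L + 1}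
       + sum (Tm g h1 h2 as) {(i,k). 1 \<le> i \<and> i + 1 \<le> k \<and> k \<le> L} = 0"
    using lo_hi[OF assms(1)] by blast
  define a1 where "a1 = sum (Tm g h1 h2 as) {(i,k). 1 \<le> k \<and> k + 2 \<le> i \<and> i \<le> L + 1}"
  define a2 where "a2 = sum (Tm g h2 h1 as) {(i,k). 1 \<le> k \<and> k + 2 \<le> i \<and> i \<le> L + 1}"
  define b1 where "b1 = sum (Tm g h1 h2 as) {(i,k). 1 \<le> i \<and> i + 1 \<le> k \<and> k \<le> L}"
  define b2 where "b2 = sum (Tm g h2 h1 as) {(i,k). 1 \<le> i \<and> i + 1 \<le> k \<and> k \<le> L}"
  have "a1 + b2 = 0" "a2 + b1 = 0" using l1 l2 a1_def a2_def b1_def b2_def by auto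
  moreover have "a1 + b1 + (a2 + b2) = (a1 + b2) + (a2 + b1)" by (simp add: algebra_simps)
  ultimately have z: "a1 + b1 + (a2 + b2) = 0" by simp
  show ?thesis
    unfolding double_split[OF assms(1), of g h1 h2] double_split[OF assms(1), of g h2 h1]
    unfolding a1_def[symmetric] a2_def[symmetric] b1_def[symmetric] b2_def[symmetric]
    using z by (simp add: sum.distrib sum_subtractf algebra_simps)
qed

lemma merge2_1_hd: "2 \<le> length as \<Longrightarrow> hd (merge2 h 1 as) = h (hd as) (as ! 1)"
  by (cases as, auto simp: merge2_def hd_conv_nth)
lemma merge2_1_tl: "2 \<le> length as \<Longrightarrow> tl (merge2 h 1 as) = drop 2 as"
  by (cases as, auto simp: merge2_def)
lemma merge2_S0: "2 \<le> length as \<Longrightarrow> hd (merge2 h (Suc 0) as) = h (hd as) (as ! 1)"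
  "2 \<le> length as \<Longrightarrow> tl (merge2 h (Suc 0) as) = drop 2 as"
  using merge2_1_hd merge2_1_tl by auto
lemma merge2_hd: "2 \<le> i \<Longrightarrow> i < length as \<Longrightarrow> hd (merge2 h i as) = hd as"
  by (cases as, auto simp: merge2_def)
lemma merge2_tl: "2 \<le> i \<Longrightarrow> i < length as \<Longrightarrow> tl (merge2 h i as) = merge2 h (i - 1) (tl as)"
  by (cases as, auto simp: merge2_def nth_Cons' take_Cons' drop_Cons' split: if_splits)
lemma merge2_butlast: "1 \<le> i \<Longrightarrow> i + 1 < length as \<Longrightarrow> butlast (merge2 h i as) = merge2 h i (butlast as)"
  by (simp add: merge2_def butlast_append nth_butlast drop_butlast take_butlast)
lemma merge2_last: "1 \<le> i \<Longrightarrow> i + 1 < length as \<Longrightarrow> last (merge2 h i as) = last as"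
  by (simp add: merge2_def last_append)
lemma merge2_end_butlast: "2 \<le> length as \<Longrightarrow> butlast (merge2 h (length as - 1) as) = take (length as - 2) as"
  by (simp add: merge2_def butlast_append numeral_2_eq_2)
lemma merge2_end_last: "2 \<le> length as \<Longrightarrow> last (merge2 h (length as - 1) as) = h (as ! (length as - 2)) (last as)"
  by (subst (2) last_conv_nth, force, simp add: merge2_def last_append last_conv_nth numeral_2_eq_2 Suc_diff_Suc)

lemma sum_shift2: "(\<Sum>i=2..n+1. g i) = (\<Sum>k=1..n. g (Suc k))"
  by (rule sum.reindex_bij_witness[where i=Suc and j="\<lambda>i. i - 1"]) auto

lemma hoch_sq:
  fixes f :: "'a::ring list \<Rightarrow> 'a"
  assumes len: "length as = n + 2" and n1: "1 \<le> n"
  shows "hd as * hoch n f (tl as) + (\<Sum>i=1..n+1. sgnp i (hoch n f (merge2 (*) i as)))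
         + sgnp n (hoch n f (butlast as) * last as) = 0"
proof -
  let ?M = "\<lambda>i. merge2 (*) i as"
  have P2: "(\<Sum>i=1..n+1. sgnp i (\<Sum>k=1..n. sgnp k (f (merge2 (*) k (?M i))))) = 0"
    using S_self[OF len, of "(*)" f] by (simp add: sgnp_sum mult.assoc)
  have P1: "(\<Sum>i=1..n+1. sgnp i (hd (?M i) * f (tl (?M i))))
      = - ((hd as * as ! 1) * f (drop 2 as)) + (\<Sum>k=1..n. - sgnp k (hd as * f (merge2 (*) k (tl as))))"
  proof -
    have "(\<Sum>i=1..n+1. sgnp i (hd (?M i) * f (tl (?M i))))
        = sgnp 1 (hd (?M 1) * f (tl (?M 1))) + (\<Sum>i=2..n+1. sgnp i (hd (?M i) * f (tl (?M i))))"
      by (subst sum.atLeast_Suc_atMost, simp, simp add: numeral_2_eq_2)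
    also have "(\<Sum>i=2..n+1. sgnp i (hd (?M i) * f (tl (?M i))))
        = (\<Sum>i=2..n+1. sgnp i (hd as * f (merge2 (*) (i - 1) (tl as))))"
      by (rule sum.cong, simp, simp add: merge2_hd merge2_tl len)
    also have "\<dots> = (\<Sum>k=1..n. sgnp (Suc k) (hd as * f (merge2 (*) k (tl as))))"
      by (subst sum_shift2, simp)
    moreover have "hd (?M 1) = hd as * as ! 1" "tl (?M 1) = drop 2 as"
      using len merge2_1_hd[of as "(*)"] merge2_1_tl[of as "(*)"] by auto
    ultimately show ?thesis by simp
  qed
  have P3: "(\<Sum>i=1..n+1. sgnp i (sgnp (n+1) (f (butlast (?M i)) * last (?M i))))
      = (\<Sum>i=1..n. sgnp i (sgnp (n+1) (f (merge2 (*) i (butlast as)) * last as)))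
        + sgnp (n + 1) (sgnp (n+1) (f (take n as) * (as ! n * last as)))"
  proof -
    have "(\<Sum>i=1..n+1. sgnp i (sgnp (n+1) (f (butlast (?M i)) * last (?M i))))
       = (\<Sum>i=1..n. sgnp i (sgnp (n+1) (f (butlast (?M i)) * last (?M i))))
         + sgnp (n+1) (sgnp (n+1) (f (butlast (?M (n+1))) * last (?M (n+1))))"
      by simp
    moreover have "(\<Sum>i=1..n. sgnp i (sgnp (n+1) (f (butlast (?M i)) * last (?M i))))
       = (\<Sum>i=1..n. sgnp i (sgnp (n+1) (f (merge2 (*) i (butlast as)) * last as)))"
      by (rule sum.cong, simp, simp add: merge2_butlast merge2_last len)
    moreover have "butlast (?M (n+1)) = take n as" "last (?M (n+1)) = as ! n * last as"
      using merge2_end_butlast[of as "(*)"] merge2_end_last[of as "(*)"] len by auto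
    ultimately show ?thesis by simp
  qed
  have hochM: "\<And>i. hoch n f (?M i) = hd (?M i) * f (tl (?M i))
        + (\<Sum>k=1..n. sgnp k (f (merge2 (*) k (?M i)))) + sgnp (n+1) (f (butlast (?M i)) * last (?M i))"
    by (simp add: hoch_def)
  have sumM: "(\<Sum>i=1..n+1. sgnp i (hoch n f (?M i))) =
     (\<Sum>i=1..n+1. sgnp i (hd (?M i) * f (tl (?M i))))
     + (\<Sum>i=1..n+1. sgnp i (\<Sum>k=1..n. sgnp k (f (merge2 (*) k (?M i)))))
     + (\<Sum>i=1..n+1. sgnp i (sgnp (n+1) (f (butlast (?M i)) * last (?M i))))"
    unfolding hochM by (simp only: sgnp_plus sum.distrib)
  obtain x b ys where as: "as = x # b # ys" using len
    by (cases as; cases "tl as") auto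
  have ly: "length ys = n" using len as by simp
  have e1: "hd (tl as) = as ! 1" "tl (tl as) = drop 2 as" "last (tl as) = last as"
     "butlast (tl as) = tl (butlast as)" "hd (butlast as) = hd as"
     "butlast (butlast as) = take n as" "last (butlast as) = as ! n"
    using as ly n1 by (auto simp: butlast_conv_take last_conv_nth nth_Cons' take_Cons')
  show ?thesis
    unfolding sumM P1 P2 P3
    by (simp add: hoch_def e1 sum_negf sgnp_sum sum.distrib algebra_simps sum_distrib_left sum_distrib_right sgnp_comm)
qed

lemma sr2: "2 \<le> r \<Longrightarrow> Suc (r - 2) = r - Suc 0" by arith

lemma oc1:
  assumes len: "length as = n + 2" and r: "1 \<le> r"
  shows "ocomp 2 (n+1) P 1 F r as =
    (if r \<le> n + 1 then P 1 [F r (butlast as), last as]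
     else if r = n + 2 then P 2 [(\<Sum>j=1..n+2. F j (butlast as)), last as]
     else P 1 [F (n+2) (butlast as), last as] + P 3 [(\<Sum>j=1..n+2. F j (butlast as)), last as])"
proof -
  have b: "take (Suc n) as = butlast as" using len by (simp add: butlast_conv_take)
  have d: "drop (Suc n) as = [last as]" using len
    by (cases as rule: rev_cases) auto
  show ?thesis using r unfolding ocomp_def Let_def by (simp add: b d numeral_2_eq_2 numeral_3_eq_3)
qed

lemma oc2:
  assumes len: "length as = n + 2" and r: "1 \<le> r"
  shows "ocomp 2 (n+1) P 2 F r as =
    (if r \<le> 1 then P 1 [hd as, (\<Sum>j=1..n+2. F j (tl as))]
     else if r \<le> n + 2 then P 2 [hd as, F (r - 1) (tl as)]
     else P 2 [hd as, F (n+2) (tl as)] + P 3 [hd as, (\<Sum>j=1..n+2. F j (tl as))])"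
proof -
  have b: "take (Suc n) (drop (Suc 0) as) = tl as" using len by (simp add: drop_Suc)
  have t: "take (Suc 0) as = [hd as]" using len by (cases as) auto
  have d: "drop (Suc (Suc n)) as = []" using len by simp
  show ?thesis using r unfolding ocomp_def Let_def by (simp add: b t d sr2)
qed

lemma oc3:
  assumes len: "length as = n + 2" and i: "1 \<le> i" "i \<le> n + 1"
  shows "ocomp (n+1) 2 F i P r as =
    (if r \<le> i - 1 then F r (merge2 (\<lambda>a b. \<Sum>j=1..3. P j [a,b]) i as)
     else if r \<le> i + 1 then F i (merge2 (\<lambda>a b. P (r - i + 1) [a,b]) i as)
     else if r \<le> n + 2 then F (r - 1) (merge2 (\<lambda>a b. \<Sum>j=1..3. P j [a,b]) i as)
     else F i (merge2 (\<lambda>a b. P 3 [a,b]) i as) + F (n+2) (merge2 (\<lambda>a b. \<Sum>j=1..3. P j [a,b]) i as))"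
proof -
  have b: "take 2 (drop (i - 1) as) = [as ! (i - 1), as ! i]" using len i
    by (simp add: take_Suc_conv_app_nth numeral_2_eq_2)
  have m: "i - 1 + 2 = i + 1" using i by simp
  have e1: "i + 2 - 1 = i + 1" "n + 1 + 2 - 1 = n + 2" "2 + 1 = (3::nat)" by simp_all
  have e2: "\<And>x. take (i - 1) as @ [x] @ drop (i + 1) as = merge2 (\<lambda>a b. x) i as"
    by (simp add: merge2_def)
  have e3: "\<not> r \<le> i + 1 \<Longrightarrow> r - 2 + 1 = r - 1" by arith
  have e4: "\<And>h. merge2 (\<lambda>a b. h [as ! (i - 1), as ! i]) i as = merge2 (\<lambda>a b. h [a, b]) i as"
    by (simp add: merge2_def)
  show ?thesis unfolding ocomp_def Let_def b m e1 e2
    unfolding e4[of "\<lambda>x. \<Sum>j=1..3. P j x"] e4[of "P 3"] e4[of "P (r - i + 1)"]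
    using e3 by simp
qed

lemma odelta_unf:
  "odelta P (n+1) F r as = sgnp n (ocomp 2 (n+1) P 1 F r as + sgnp n (ocomp 2 (n+1) P 2 F r as)
      - sgnp n (\<Sum>i=1..n+1. sgnp (i - 1) (ocomp (n+1) 2 F i P r as)))"
  by (simp add: odelta_def obracket_def numeral_2_eq_2)

lemma sum_Theta:
  assumes "1 \<le> n"
  shows "(\<Sum>j=1..n+2. Theta n f j bs) = sgnp (n+1) (hoch n f bs)"
proof -
  have z: "(\<Sum>j=2..n. Theta n f j bs) = 0" by (rule sum.neutral) (simp add: Theta_def)
  have s1: "(\<Sum>j=1..n+2. Theta n f j bs) = (\<Sum>j=1..n. Theta n f j bs) + Theta n f (n+1) bs + Theta n f (n+2) bs"
    by (simp add: numeral_2_eq_2)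
  have s2: "(\<Sum>j=1..n. Theta n f j bs) = Theta n f 1 bs + (\<Sum>j=2..n. Theta n f j bs)"
    using assms by (simp add: sum.atLeast_Suc_atMost numeral_2_eq_2)
  show ?thesis unfolding s1 s2 z using assms
    by (simp add: Theta_def hoch_def sgnp_sum algebra_simps sgnp_comm[of n])
qed

lemma piN_simps:
  "piN N 1 [a,b] = a * N b" "piN N 2 [a,b] = N a * b" "piN N 3 [a,b] = - N (a * b)"
  by (simp_all add: piN_def)

lemma piN_sum3: "(\<Sum>j=1..3. piN N j [a,b]) = N a * b + a * N b - N (a * b)"
  by (simp add: piN_def Let_def numeral_3_eq_3 numeral_2_eq_2 algebra_simps)

lemma piN_sum3': "(\<lambda>a b. \<Sum>j=1..3. piN N j [a,b]) = (\<lambda>a b. N a * b + a * N b - N (a * b))"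
  by (intro ext) (rule piN_sum3)

lemma merge3_upd:
  assumes "1 \<le> j" "j + 1 < length as"
  shows "merge3 t j as = (merge3 (\<lambda>x y z. 0) j as)[j - 1 := t (as ! (j - 1)) (as ! j) (as ! (j + 1))]"
  using assms by (simp add: merge3_def list_update_append)

lemma merge3_add:
  fixes f :: "'a::ab_group_add list \<Rightarrow> 'a"
  assumes fadd: "\<And>bs i x y. length bs = n \<Longrightarrow> i < n \<Longrightarrow> f (bs[i := x + y]) = f (bs[i := x]) + f (bs[i := y])"
    and len: "length as = n + 2" and j: "1 \<le> j" "j \<le> n"
  shows "f (merge3 t j as) + f (merge3 t' j as) = f (merge3 (\<lambda>x y z. t x y z + t' x y z) j as)"
proof -
  have l: "length (merge3 (\<lambda>x y z. 0) j as) = n" using len j by (simp add: merge3_def)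
  have jj: "j + 1 < length as" using len j by simp
  show ?thesis
    unfolding merge3_upd[OF j(1) jj, of t] merge3_upd[OF j(1) jj, of t'] merge3_upd[OF j(1) jj, of "\<lambda>x y z. t x y z + t' x y z"]
    using fadd[OF l, of "j - 1"] j by simp
qed

locale addN =
  fixes N :: "'a::ring \<Rightarrow> 'a"
  assumes Nadd: "\<And>x y. N (x + y) = N x + N y"
begin

lemma N0[simp]: "N 0 = 0"
  using Nadd[of 0 0] by simp
lemma Nneg[simp]: "N (- x) = - N x"
  using Nadd[of x "- x"] by (simp add: minus_unique)
lemma Ndiff[simp]: "N (x - y) = N x - N y"
  using Nadd[of x "- y"] by simp
lemma Nsgnp[simp]: "N (sgnp k x) = sgnp k (N x)"
  by (simp add: sgnp_def)
lemma Nsum: "N (sum g A) = (\<Sum>i\<in>A. N (g i))"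
  by (induction A rule: infinite_finite_induct) (simp_all add: Nadd)
lemmas Nplus[simp] = Nadd

lemma list_facts:
  assumes len: "length as = n + 2" and n1: "1 \<le> n"
  shows "hd (tl as) = as ! 1" "tl (tl as) = drop 2 as" "last (tl as) = last as"
     "butlast (tl as) = tl (butlast as)" "hd (butlast as) = hd as"
     "butlast (butlast as) = take n as" "last (butlast as) = as ! n"
proof -
  obtain x b ys where as: "as = x # b # ys" using len
    by (cases as; cases "tl as") auto
  have ly: "length ys = n" using len as by simp
  show "hd (tl as) = as ! 1" "tl (tl as) = drop 2 as" "last (tl as) = last as"
     "butlast (tl as) = tl (butlast as)" "hd (butlast as) = hd as"
     "butlast (butlast as) = take n as" "last (butlast as) = as ! n"
    using as ly n1 by (auto simp: butlast_conv_take last_conv_nth nth_Cons' take_Cons')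
qed

lemma case1:
  assumes len: "length as = n + 2" and n1: "1 \<le> n"
  shows "odelta (piN N) (n+1) (Theta n f) 1 as = Theta (n+1) (dN N n f) 1 as"
proof -
  let ?c = "\<lambda>a b. N a * b + a * N b - N (a * b)"
  have A1: "ocomp 2 (n+1) (piN N) 1 (Theta n f) 1 as
      = sgnp (n+1) (hd as * f (tl (butlast as))) * N (last as)"
    using oc1[OF len, of 1] list_facts[OF len n1] by (simp add: piN_def Let_def Theta_def)
  have A2: "ocomp 2 (n+1) (piN N) 2 (Theta n f) 1 as = hd as * N (sgnp (n+1) (hoch n f (tl as)))"
    using oc2[OF len, of 1 "piN N" "Theta n f"] unfolding sum_Theta[OF n1] by (simp add: piN_def Let_def)
  have C: "(\<Sum>i=1..n+1. sgnp (i - 1) (ocomp (n+1) 2 (Theta n f) i (piN N) 1 as))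
     = sgnp (n+1) ((hd as * N (as ! 1)) * f (drop 2 as))
       + (\<Sum>k=1..n. sgnp k (sgnp (n+1) (hd as * f (merge2 ?c k (tl as)))))"
  proof -
    have "(\<Sum>i=1..n+1. sgnp (i - 1) (ocomp (n+1) 2 (Theta n f) i (piN N) 1 as))
      = sgnp 0 (ocomp (n+1) 2 (Theta n f) 1 (piN N) 1 as)
        + (\<Sum>i=2..n+1. sgnp (i - 1) (ocomp (n+1) 2 (Theta n f) i (piN N) 1 as))"
      by (subst sum.atLeast_Suc_atMost, simp, simp add: numeral_2_eq_2)
    also have "(\<Sum>i=2..n+1. sgnp (i - 1) (ocomp (n+1) 2 (Theta n f) i (piN N) 1 as))
       = (\<Sum>i=2..n+1. sgnp (i - 1) (sgnp (n+1) (hd as * f (merge2 ?c (i - 1) (tl as)))))"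
    proof (rule sum.cong[OF refl])
      fix i assume i: "i \<in> {2..n+1}"
      have "ocomp (n+1) 2 (Theta n f) i (piN N) 1 as = Theta n f 1 (merge2 ?c i as)"
      proof -
        have "1 \<le> i - 1" "i \<le> n + 1" "1 \<le> i" using i by auto
        then show ?thesis using oc3[OF len, of i "Theta n f" "piN N" 1] unfolding piN_sum3' by simp
      qed
      also have "\<dots> = sgnp (n+1) (hd as * f (merge2 ?c (i - 1) (tl as)))"
        using i len by (simp add: Theta_def merge2_hd merge2_tl)
      finally show "sgnp (i - 1) (ocomp (n+1) 2 (Theta n f) i (piN N) 1 as)
         = sgnp (i - 1) (sgnp (n+1) (hd as * f (merge2 ?c (i - 1) (tl as))))" by simp
    qed
    also have "\<dots> = (\<Sum>k=1..n. sgnp k (sgnp (n+1) (hd as * f (merge2 ?c k (tl as)))))"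
      by (subst sum_shift2, simp)
    moreover have "ocomp (n+1) 2 (Theta n f) 1 (piN N) 1 as = sgnp (n+1) ((hd as * N (as ! 1)) * f (drop 2 as))"
      using oc3[OF len, of 1 "Theta n f" "piN N" 1] len
      by (simp add: piN_def Let_def Theta_def merge2_1_hd merge2_1_tl merge2_S0)
    ultimately show ?thesis by simp
  qed
  show ?thesis
    unfolding odelta_unf A1 A2 C
    using list_facts[OF len n1]
    by (simp add: Theta_def dN_def sum_negf sgnp_sum sum.distrib algebra_simps sum_distrib_left sgnp_comm)
qed


lemma case_mid:
  assumes len: "length as = n + 2" and n1: "1 \<le> n" and r: "2 \<le> r" "r \<le> n + 1"
  shows "odelta (piN N) (n+1) (Theta n f) r as = Theta (n+1) (dN N n f) r as"
proof -
  define X where "X = sgnp (n+1) ((N (hd as) * as ! 1) * f (drop 2 as))"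
  define Y where "Y = f (take n as) * (as ! n * N (last as))"
  have rhs: "Theta (n+1) (dN N n f) r as = 0" using r by (simp add: Theta_def)
  have A1: "ocomp 2 (n+1) (piN N) 1 (Theta n f) r as
      = (if r = n + 1 then f (take n as) * as ! n * N (last as) else 0)"
    using oc1[OF len, of r "piN N" "Theta n f"] list_facts[OF len n1] r
    by (simp add: piN_def Let_def Theta_def)
  have A2: "ocomp 2 (n+1) (piN N) 2 (Theta n f) r as
      = (if r = 2 then N (hd as) * sgnp (n+1) (as ! 1 * f (drop 2 as)) else 0)"
  proof -
    have "ocomp 2 (n+1) (piN N) 2 (Theta n f) r as = N (hd as) * Theta n f (r - 1) (tl as)"
      using oc2[OF len, of r "piN N" "Theta n f"] r by (simp add: piN_def Let_def)
    then show ?thesis using list_facts[OF len n1] r by (auto simp: Theta_def)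
  qed
  have Ci: "ocomp (n+1) 2 (Theta n f) i (piN N) r as =
      (if i = 1 then (if r = 2 then X else 0) else 0) + (if i = n + 1 then (if r = n + 1 then Y else 0) else 0)"
    if i: "1 \<le> i" "i \<le> n + 1" for i
  proof -
    have oc: "ocomp (n+1) 2 (Theta n f) i (piN N) r as =
      (if r \<le> i - 1 then Theta n f r (merge2 (\<lambda>a b. \<Sum>j=1..3. piN N j [a,b]) i as)
       else if r \<le> i + 1 then Theta n f i (merge2 (\<lambda>a b. piN N (r - i + 1) [a,b]) i as)
       else Theta n f (r - 1) (merge2 (\<lambda>a b. \<Sum>j=1..3. piN N j [a,b]) i as))"
      using oc3[OF len i, of "Theta n f" "piN N" r] r by simp
    consider (one) "i = 1" | (mid) "2 \<le> i" "i \<le> n" | (last) "i = n + 1" using i by linarith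
    then show ?thesis
    proof cases
      case one
      then show ?thesis unfolding oc X_def using r len
        by (auto simp: Theta_def piN_def Let_def merge2_1_hd merge2_1_tl merge2_S0)
    next
      case mid
      then show ?thesis unfolding oc using r by (auto simp: Theta_def)
    next
      case last
      have e: "butlast (merge2 h (Suc n) as) = take n as" "last (merge2 h (Suc n) as) = h (as ! n) (last as)" for h
        using merge2_end_butlast[of as h] merge2_end_last[of as h] len by auto
      show ?thesis unfolding oc Y_def using r last n1
        by (auto simp: Theta_def piN_def Let_def e)
    qed
  qed
  have C: "(\<Sum>i=1..n+1. sgnp (i - 1) (ocomp (n+1) 2 (Theta n f) i (piN N) r as))
      = (if r = 2 then X else 0) + (if r = n + 1 then sgnp n Y else 0)"
  proof -
    have "(\<Sum>i=1..n+1. sgnp (i - 1) (ocomp (n+1) 2 (Theta n f) i (piN N) r as))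
       = (\<Sum>i=1..n+1. (if i = 1 then (if r = 2 then X else 0) else 0)
            + (if i = n + 1 then sgnp n (if r = n + 1 then Y else 0) else 0))"
    proof (rule sum.cong[OF refl])
      fix i assume "i \<in> {1..n+1}"
      then have "1 \<le> i" "i \<le> n + 1" by auto
      from Ci[OF this] show "sgnp (i - 1) (ocomp (n+1) 2 (Theta n f) i (piN N) r as) =
         (if i = 1 then (if r = 2 then X else 0) else 0)
            + (if i = n + 1 then sgnp n (if r = n + 1 then Y else 0) else 0)"
        using n1 by auto
    qed
    also have "\<dots> = (if r = 2 then X else 0) + (if r = n + 1 then sgnp n Y else 0)"
      by (simp add: sum.distrib)
    finally show ?thesis .
  qed
  show ?thesis
    unfolding odelta_unf A1 A2 C rhs X_def Y_def
    using r by (auto simp: algebra_simps)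
qed


lemma case_n2:
  assumes len: "length as = n + 2" and n1: "1 \<le> n"
  shows "odelta (piN N) (n+1) (Theta n f) (n+2) as = Theta (n+1) (dN N n f) (n+2) as"
proof -
  let ?c = "\<lambda>a b. N a * b + a * N b - N (a * b)"
  have rhs: "Theta (n+1) (dN N n f) (n+2) as = dN N n f (butlast as) * last as"
    by (simp add: Theta_def)
  have A1: "ocomp 2 (n+1) (piN N) 1 (Theta n f) (n+2) as = N (sgnp (n+1) (hoch n f (butlast as))) * last as"
    using oc1[OF len, of "n+2" "piN N" "Theta n f"] unfolding sum_Theta[OF n1]
    by (simp add: piN_def Let_def)
  have A2: "ocomp 2 (n+1) (piN N) 2 (Theta n f) (n+2) as
      = N (hd as) * (f (tl (butlast as)) * last as)"
    using oc2[OF len, of "n+2" "piN N" "Theta n f"] list_facts[OF len n1] n1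
    by (simp add: piN_def Let_def Theta_def)
  have Ci: "ocomp (n+1) 2 (Theta n f) i (piN N) (n+2) as = f (merge2 ?c i (butlast as)) * last as"
    if i: "1 \<le> i" "i \<le> n" for i
  proof -
    have "ocomp (n+1) 2 (Theta n f) i (piN N) (n+2) as = Theta n f (n+1) (merge2 ?c i as)"
    proof -
      have "\<not> Suc (Suc n) \<le> i - Suc 0" "\<not> n + 2 \<le> i + 1" "1 \<le> i" "i \<le> n + 1" using i by auto
      then show ?thesis using oc3[OF len, of i "Theta n f" "piN N" "n+2"] unfolding piN_sum3' by simp
    qed
    then show ?thesis using i len by (simp add: Theta_def merge2_butlast merge2_last)
  qed
  have Cn: "ocomp (n+1) 2 (Theta n f) (n+1) (piN N) (n+2) as = f (take n as) * (N (as ! n) * last as)"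
  proof -
    have e: "butlast (merge2 h (Suc n) as) = take n as" "last (merge2 h (Suc n) as) = h (as ! n) (last as)" for h
      using merge2_end_butlast[of as h] merge2_end_last[of as h] len by auto
    show ?thesis using oc3[OF len, of "n+1" "Theta n f" "piN N" "n+2"] n1
      by (simp add: Theta_def piN_def Let_def e)
  qed
  have C: "(\<Sum>i=1..n+1. sgnp (i - 1) (ocomp (n+1) 2 (Theta n f) i (piN N) (n+2) as))
      = (\<Sum>i=1..n. sgnp (i - 1) (f (merge2 ?c i (butlast as)) * last as))
        + sgnp n (f (take n as) * (N (as ! n) * last as))"
  proof -
    have "(\<Sum>i=1..n+1. sgnp (i - 1) (ocomp (n+1) 2 (Theta n f) i (piN N) (n+2) as))
       = (\<Sum>i=1..n. sgnp (i - 1) (ocomp (n+1) 2 (Theta n f) i (piN N) (n+2) as))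
         + sgnp n (ocomp (n+1) 2 (Theta n f) (n+1) (piN N) (n+2) as)" by simp
    also have "(\<Sum>i=1..n. sgnp (i - 1) (ocomp (n+1) 2 (Theta n f) i (piN N) (n+2) as))
       = (\<Sum>i=1..n. sgnp (i - 1) (f (merge2 ?c i (butlast as)) * last as))"
      by (rule sum.cong[OF refl]) (use Ci in auto)
    finally show ?thesis unfolding Cn .
  qed
  have sgi: "\<And>i (x::'a). 1 \<le> i \<Longrightarrow> sgnp (i - 1) x = - sgnp i x"
    by (simp add: sgnp_def)
  have C': "(\<Sum>i=1..n. sgnp (i - 1) (f (merge2 ?c i (butlast as)) * last as))
      = - (\<Sum>i=1..n. sgnp i (f (merge2 ?c i (butlast as)) * last as))"
    unfolding sum_negf[symmetric] by (rule sum.cong) (auto simp: sgnp_pred)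
  show ?thesis
    unfolding odelta_unf A1 A2 C C' rhs
    using list_facts[OF len n1]
    by (simp add: dN_def sum_negf sgnp_sum algebra_simps sum_distrib_right)
qed


lemma SA_SB:
  fixes f :: "'a list \<Rightarrow> 'a"
  assumes fadd: "\<And>bs i x y. length bs = n \<Longrightarrow> i < n \<Longrightarrow> f (bs[i := x + y]) = f (bs[i := x]) + f (bs[i := y])"
    and len: "length as = n + 2"
  shows "(\<Sum>i=1..n+1. \<Sum>k=1..n. sgnp (i + k) (f (merge2 (\<lambda>a b. N a * b + a * N b - N (a * b)) k (merge2 (*) i as))))
       + (\<Sum>i=1..n+1. \<Sum>k=1..n. sgnp (i + k) (f (merge2 (*) k (merge2 (\<lambda>a b. N a * b + a * N b - N (a * b)) i as)))) = 0"
proof -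
  let ?c = "\<lambda>a b. N a * b + a * N b - N (a * b)"
  have z: "f (merge3 (\<lambda>x y z. ?c (x * y) z) j as) - f (merge3 (\<lambda>x y z. ?c x (y * z)) j as)
          + f (merge3 (\<lambda>x y z. ?c x y * z) j as) - f (merge3 (\<lambda>x y z. x * ?c y z) j as) = 0"
    if j: "j \<in> {1..n}" for j
  proof -
    have j1: "1 \<le> j" "j \<le> n" using j by auto
    have e: "(\<lambda>x y z. ?c (x * y) z + ?c x y * z) = (\<lambda>x y z. ?c x (y * z) + x * ?c y z)"
      by (intro ext) (simp add: algebra_simps)
    have "f (merge3 (\<lambda>x y z. ?c (x * y) z) j as) + f (merge3 (\<lambda>x y z. ?c x y * z) j as)
        = f (merge3 (\<lambda>x y z. ?c x (y * z)) j as) + f (merge3 (\<lambda>x y z. x * ?c y z) j as)"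
      using merge3_add[OF fadd len j1, of "\<lambda>x y z. ?c (x*y) z" "\<lambda>x y z. ?c x y * z"]
        merge3_add[OF fadd len j1, of "\<lambda>x y z. ?c x (y*z)" "\<lambda>x y z. x * ?c y z"] e
      by simp
    then show ?thesis by (simp add: algebra_simps)
  qed
  show ?thesis
    unfolding S_pair[OF len, of f ?c "(*)"] by (rule sum.neutral) (use z in blast)
qed


lemma case_n3:
  fixes f :: "'a list \<Rightarrow> 'a"
  assumes fadd: "\<And>bs i x y. length bs = n \<Longrightarrow> i < n \<Longrightarrow> f (bs[i := x + y]) = f (bs[i := x]) + f (bs[i := y])"
    and len: "length as = n + 2" and n1: "1 \<le> n"
  shows "odelta (piN N) (n+1) (Theta n f) (n+3) as = Theta (n+1) (dN N n f) (n+3) as"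
proof -
  let ?c = "\<lambda>a b. N a * b + a * N b - N (a * b)"
  let ?M = "\<lambda>i. merge2 (*) i as"
  define X where "X = hd as"
  define Z where "Z = last as"
  define T1 where "T1 = (\<Sum>k=1..n. sgnp k (f (merge2 (*) k (butlast as)) * N Z))"
  define T2 where "T2 = (\<Sum>k=1..n. sgnp k (N X * f (merge2 (*) k (tl as))))"
  define H1 where "H1 = N (hoch n f (butlast as) * Z)"
  define H2 where "H2 = N (X * hoch n f (tl as))"
  define E1 where "E1 = N (X * as ! 1) * f (drop 2 as)"
  define E2 where "E2 = f (take n as) * N (as ! n * Z)"
  define SA where "SA = (\<Sum>i=1..n+1. \<Sum>k=1..n. sgnp (i + k) (f (merge2 (*) k (merge2 ?c i as))))"
  define SB where "SB = (\<Sum>i=1..n+1. \<Sum>k=1..n. sgnp (i + k) (f (merge2 ?c k (merge2 (*) i as))))"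
  have SS0: "SB + SA = 0" unfolding SA_def SB_def by (rule SA_SB[OF fadd len])
  have SS: "sgnp n SA + sgnp n SB = 0"
    using SS0 sgnp_plus[of n SA SB] by (simp add: add.commute)
  have F2: "\<And>bs. Theta n f (n+2) bs = (\<Sum>k=1..n. sgnp (n+k+1) (f (merge2 (*) k bs)))"
    by (simp add: Theta_def)
  have A1: "ocomp 2 (n+1) (piN N) 1 (Theta n f) (n+3) as = - sgnp n T1 + sgnp n H1"
  proof -
    have "ocomp 2 (n+1) (piN N) 1 (Theta n f) (n+3) as
       = Theta n f (n+2) (butlast as) * N Z + - N (sgnp (n+1) (hoch n f (butlast as)) * Z)"
      using oc1[OF len, of "n+3" "piN N" "Theta n f"] unfolding sum_Theta[OF n1]
      by (simp add: piN_def Let_def Z_def)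
    then show ?thesis unfolding F2 T1_def H1_def
      by (simp add: sum_distrib_right sgnp_sum sum_negf)
  qed
  have A2: "ocomp 2 (n+1) (piN N) 2 (Theta n f) (n+3) as = - sgnp n T2 + sgnp n H2"
  proof -
    have "ocomp 2 (n+1) (piN N) 2 (Theta n f) (n+3) as
       = N X * Theta n f (n+2) (tl as) + - N (X * sgnp (n+1) (hoch n f (tl as)))"
      using oc2[OF len, of "n+3" "piN N" "Theta n f"] unfolding sum_Theta[OF n1]
      by (simp add: piN_def Let_def X_def)
    then show ?thesis unfolding F2 T2_def H2_def
      by (simp add: sum_distrib_left sgnp_sum sum_negf)
  qed
  have Ci: "ocomp (n+1) 2 (Theta n f) i (piN N) (n+3) as
      = Theta n f i (merge2 (\<lambda>a b. - N (a * b)) i as) + Theta n f (n+2) (merge2 ?c i as)"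
    if i: "1 \<le> i" "i \<le> n + 1" for i
  proof -
    have "\<not> n + 3 \<le> i - 1" "\<not> n + 3 \<le> i + 1" "\<not> n + 3 \<le> n + 2" using i by auto
    then show ?thesis using oc3[OF len i, of "Theta n f" "piN N" "n+3"] unfolding piN_sum3'
      by (simp add: piN_def Let_def)
  qed
  have Cfirst: "(\<Sum>i=1..n+1. sgnp (i - 1) (Theta n f i (merge2 (\<lambda>a b. - N (a * b)) i as)))
      = sgnp n E1 - sgnp n E2"
  proof -
    let ?g = "\<lambda>i. sgnp (i - 1) (Theta n f i (merge2 (\<lambda>a b. - N (a * b)) i as))"
    have "(\<Sum>i=1..n+1. ?g i) = ?g 1 + (\<Sum>i=2..n. ?g i) + ?g (n+1)"
      using n1 by (simp add: sum.atLeast_Suc_atMost numeral_2_eq_2)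
    moreover have "(\<Sum>i=2..n. ?g i) = 0" by (rule sum.neutral) (simp add: Theta_def)
    moreover have "?g 1 = sgnp n E1"
      using len n1 by (simp add: Theta_def E1_def X_def merge2_S0)
    moreover have "?g (n+1) = - sgnp n E2"
    proof -
      have e: "butlast (merge2 h (Suc n) as) = take n as" "last (merge2 h (Suc n) as) = h (as ! n) (last as)" for h
        using merge2_end_butlast[of as h] merge2_end_last[of as h] len by auto
      show ?thesis using n1 by (simp add: Theta_def E2_def Z_def e)
    qed
    ultimately show ?thesis by simp
  qed
  have Csecond: "(\<Sum>i=1..n+1. sgnp (i - 1) (Theta n f (n+2) (merge2 ?c i as))) = sgnp n SA"
    unfolding SA_def F2 sgnp_sum
    by (rule sum.cong[OF refl]) (auto simp: sgnp_pred sgnp_sum sgnp_comm)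
  have C: "(\<Sum>i=1..n+1. sgnp (i - 1) (ocomp (n+1) 2 (Theta n f) i (piN N) (n+3) as))
     = sgnp n E1 - sgnp n E2 + sgnp n SA"
  proof -
    have "(\<Sum>i=1..n+1. sgnp (i - 1) (ocomp (n+1) 2 (Theta n f) i (piN N) (n+3) as))
      = (\<Sum>i=1..n+1. sgnp (i - 1) (Theta n f i (merge2 (\<lambda>a b. - N (a * b)) i as))
          + sgnp (i - 1) (Theta n f (n+2) (merge2 ?c i as)))"
      by (rule sum.cong[OF refl]) (use Ci in auto)
    then show ?thesis unfolding sum.distrib Cfirst Csecond by simp
  qed
  have rhs: "Theta (n+1) (dN N n f) (n+3) as = (\<Sum>i=1..n+1. sgnp (n+i) (dN N n f (?M i)))"
    by (simp add: Theta_def)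
  have dsplit: "(\<Sum>i=1..n+1. sgnp (n+i) (dN N n f (?M i)))
     = (\<Sum>i=1..n+1. sgnp (n+i) (N (hd (?M i)) * f (tl (?M i))))
       - (\<Sum>i=1..n+1. sgnp (n+i) (sgnp n (f (butlast (?M i)) * N (last (?M i)))))
       + (\<Sum>i=1..n+1. sgnp (n+i) (\<Sum>k=1..n. sgnp k (f (merge2 ?c k (?M i)))))
       - (\<Sum>i=1..n+1. sgnp (n+i) (N (hoch n f (?M i))))"
    unfolding dN_def by (simp only: sgnp_plus sgnp_diff sum.distrib sum_subtractf)
  have Ra: "(\<Sum>i=1..n+1. sgnp (n+i) (N (hd (?M i)) * f (tl (?M i)))) = - sgnp n E1 - sgnp n T2"
  proof -
    have "(\<Sum>i=1..n+1. sgnp (n+i) (N (hd (?M i)) * f (tl (?M i))))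
        = sgnp (n+1) (N (hd (?M 1)) * f (tl (?M 1))) + (\<Sum>i=2..n+1. sgnp (n+i) (N (hd (?M i)) * f (tl (?M i))))"
      by (subst sum.atLeast_Suc_atMost, simp, simp add: numeral_2_eq_2)
    also have "(\<Sum>i=2..n+1. sgnp (n+i) (N (hd (?M i)) * f (tl (?M i))))
        = (\<Sum>i=2..n+1. sgnp (n+i) (N X * f (merge2 (*) (i - 1) (tl as))))"
      by (rule sum.cong, simp, simp add: merge2_hd merge2_tl len X_def)
    also have "\<dots> = (\<Sum>k=1..n. sgnp (n + Suc k) (N X * f (merge2 (*) k (tl as))))"
      by (subst sum_shift2, simp)
    moreover have "hd (?M 1) = X * as ! 1" "tl (?M 1) = drop 2 as"
      using len merge2_1_hd[of as "(*)"] merge2_1_tl[of as "(*)"] by (auto simp: X_def)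
    ultimately show ?thesis unfolding T2_def E1_def
      by (simp add: sgnp_sum sum_negf)
  qed
  have Rb: "(\<Sum>i=1..n+1. sgnp (n+i) (sgnp n (f (butlast (?M i)) * N (last (?M i))))) = T1 - sgnp n E2"
  proof -
    have "(\<Sum>i=1..n+1. sgnp (n+i) (sgnp n (f (butlast (?M i)) * N (last (?M i)))))
       = (\<Sum>i=1..n. sgnp (n+i) (sgnp n (f (butlast (?M i)) * N (last (?M i)))))
         + sgnp (n+(n+1)) (sgnp n (f (butlast (?M (n+1))) * N (last (?M (n+1)))))"
      by simp
    moreover have "(\<Sum>i=1..n. sgnp (n+i) (sgnp n (f (butlast (?M i)) * N (last (?M i)))))
       = (\<Sum>i=1..n. sgnp i (f (merge2 (*) i (butlast as)) * N Z))"
      by (rule sum.cong, simp, simp add: merge2_butlast merge2_last len Z_def sgnp_comm[of n])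
    moreover have "butlast (?M (n+1)) = take n as" "last (?M (n+1)) = as ! n * Z"
      using merge2_end_butlast[of as "(*)"] merge2_end_last[of as "(*)"] len by (auto simp: Z_def)
    ultimately show ?thesis unfolding T1_def E2_def by simp
  qed
  have Rc: "(\<Sum>i=1..n+1. sgnp (n+i) (\<Sum>k=1..n. sgnp k (f (merge2 ?c k (?M i))))) = sgnp n SB"
    unfolding SB_def sgnp_sum
    by (rule sum.cong[OF refl]) (auto simp: sgnp_sum sgnp_comm)
  have Rd: "(\<Sum>i=1..n+1. sgnp (n+i) (N (hoch n f (?M i)))) = - sgnp n H2 - H1"
  proof -
    have "(\<Sum>i=1..n+1. sgnp (n+i) (N (hoch n f (?M i)))) = sgnp n (N (\<Sum>i=1..n+1. sgnp i (hoch n f (?M i))))"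
      by (simp add: Nsum sgnp_sum)
    also have "(\<Sum>i=1..n+1. sgnp i (hoch n f (?M i))) = - (X * hoch n f (tl as)) - sgnp n (hoch n f (butlast as) * Z)"
      using hoch_sq[OF len n1, of f] unfolding X_def Z_def
      by (simp add: algebra_simps eq_neg_iff_add_eq_0 add_eq_0_iff2)
    finally show ?thesis unfolding H1_def H2_def by simp
  qed
  show ?thesis
    unfolding odelta_unf A1 A2 C rhs dsplit Ra Rb Rc Rd
    using SS by (simp add: algebra_simps)
qed

end

theorem proposition2p16:
  fixes scale :: "'k::field_char_0 \<Rightarrow> 'a::ring \<Rightarrow> 'a"
    and N :: "'a \<Rightarrow> 'a" and f :: "'a list \<Rightarrow> 'a" and n :: nat
  assumes "vector_space scale"
    and "bilinear_mult scale TYPE('a)"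
    and "linear_map scale N"
    and "nijenhuis N"
    and "n \<ge> 1"
    and "multilinear_on scale n f"
  shows "\<forall>r \<in> {1..n+3}. \<forall>as. length as = n + 2 \<longrightarrow>
           odelta (piN N) (n + 1) (Theta n f) r as = Theta (n + 1) (dN N n f) r as"
proof (intro ballI allI impI)
  fix r and as :: "'a list"
  assume r: "r \<in> {1..n+3}" and len: "length as = n + 2"
  interpret addN N
    by unfold_locales (use assms(3) in \<open>simp add: linear_map_def\<close>)
  have fadd: "\<And>bs i x y. length bs = n \<Longrightarrow> i < n \<Longrightarrow> f (bs[i := x + y]) = f (bs[i := x]) + f (bs[i := y])"
    using assms(6) unfolding multilinear_on_def by blast
  have n1: "1 \<le> n" using assms(5) by simp
  consider (a) "r = 1" | (b) "2 \<le> r" "r \<le> n + 1" | (c) "r = n + 2" | (d) "r = n + 3"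
    using r by fastforce
  then show "odelta (piN N) (n + 1) (Theta n f) r as = Theta (n + 1) (dN N n f) r as"
  proof cases
    case a then show ?thesis using case1[OF len n1] by simp
  next
    case b then show ?thesis using case_mid[OF len n1] by simp
  next
    case c then show ?thesis using case_n2[OF len n1] by simp
  next
    case d then show ?thesis using case_n3[OF fadd len n1] by simp
  qed
qed

end
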